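(* Let $\mathcal A$ be an NFA and let $R$ be a strict partial order on its states with $R\subseteq\ \subseteq^{\mathrm{fw}}$. Then $P(\mathrm{id},R)$ is good for pruning on NFA: $\mathcal L(\mathrm{Prune}(\mathcal A,P(\mathrm{id},R)))=\mathcal L(\mathcal A)$. In particular this holds for $R$ the strict part of $\subseteq^{\mathrm{fw}}$.
   Context: An NFA is $\mathcal A=(\Sigma,Q,I,F,\delta)$, $\delta\subseteq Q\times\Sigma\times Q$ (assumed forward and backward complete); its language is the set of finite words $w$ having a finite trace on $w$ starting in $I$ and ending in $F$ (the empty trace on $\varepsilon$ is a single state). Forward finite trace inclusion: $p\subseteq^{\mathrm{fw}}q$ iff for every finite word $w$, if there is a finite $w$-trace from $p$ ending in $F$ then there is a finite $w$-trace from $q$ ending in $F$. Strict part: $p\subseteq q$ and not $q\subseteq p$. $\mathrm{Prune}(\mathcal A,P)$ has transition set $\{t\in\delta:\nexists t'\in\delta,(t,t')\in P\}$; $P(R_b,R_f)=\{((p,\sigma,r),(p',\sigma,r'))\in\delta\times\delta:p\,R_b\,p',\ r\,R_f\,r'\}$; $\mathrm{id}$ is the identity relation. *)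

theory Defs
  imports Main
begin

record ('q, 'a) nfa =
  alph   :: "'a set"
  states :: "'q set"
  init   :: "'q set"
  final  :: "'q set"
  delta  :: "('q \<times> 'a \<times> 'q) set"

definition is_nfa :: "('q, 'a) nfa \<Rightarrow> bool" where
  "is_nfa A \<longleftrightarrow> finite (alph A) \<and> finite (states A)
     \<and> init A \<subseteq> states A \<and> final A \<subseteq> states A
     \<and> delta A \<subseteq> states A \<times> alph A \<times> states A
     \<and> (\<forall>p\<in>states A. \<forall>a\<in>alph A. \<exists>r. (p, a, r) \<in> delta A)
     \<and> (\<forall>r\<in>states A. \<forall>a\<in>alph A. \<exists>p. (p, a, r) \<in> delta A)"

inductive path :: "('q \<times> 'a \<times> 'q) set \<Rightarrow> 'q \<Rightarrow> 'a list \<Rightarrow> 'q \<Rightarrow> bool"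
  for d where
  path_nil: "path d p [] p"
| path_cons: "(p, a, r) \<in> d \<Longrightarrow> path d r w q \<Longrightarrow> path d p (a # w) q"

definition lang :: "('q, 'a) nfa \<Rightarrow> 'a list set" where
  "lang A = {w. \<exists>p\<in>init A. \<exists>q\<in>final A. path (delta A) p w q}"

definition fw_incl :: "('q, 'a) nfa \<Rightarrow> ('q \<times> 'q) set" where
  "fw_incl A = {(p, q). p \<in> states A \<and> q \<in> states A \<and>
     (\<forall>w. (\<exists>f\<in>final A. path (delta A) p w f) \<longrightarrow> (\<exists>f\<in>final A. path (delta A) q w f))}"

definition strict_part :: "('q \<times> 'q) set \<Rightarrow> ('q \<times> 'q) set" where
  "strict_part S = {(p, q). (p, q) \<in> S \<and> (q, p) \<notin> S}"

definition strict_partial_order :: "('q \<times> 'q) set \<Rightarrow> bool" where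
  "strict_partial_order R \<longleftrightarrow> irrefl R \<and> trans R"

definition Prel :: "('q, 'a) nfa \<Rightarrow> ('q \<times> 'q) set \<Rightarrow> ('q \<times> 'q) set
    \<Rightarrow> (('q \<times> 'a \<times> 'q) \<times> ('q \<times> 'a \<times> 'q)) set" where
  "Prel A Rb Rf = {((p, a, r), (p', a', r')). (p, a, r) \<in> delta A \<and> (p', a', r') \<in> delta A
      \<and> a' = a \<and> (p, p') \<in> Rb \<and> (r, r') \<in> Rf}"

definition prune :: "('q, 'a) nfa \<Rightarrow> (('q \<times> 'a \<times> 'q) \<times> ('q \<times> 'a \<times> 'q)) set \<Rightarrow> ('q, 'a) nfa" where
  "prune A P = A\<lparr>delta := {t \<in> delta A. \<not> (\<exists>t'\<in>delta A. (t, t') \<in> P)}\<rparr>"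

end

theory Submission
  imports Defs
begin

lemma path_ConsE: "path d p (a # w) q \<Longrightarrow> \<exists>r. (p, a, r) \<in> d \<and> path d r w q"
  by (auto elim: path.cases)

lemma main_lemma:
  assumes nfa: "is_nfa A"
    and RS: "R \<subseteq> states A \<times> states A" and spo: "strict_partial_order R"
    and Rfw: "R \<subseteq> fw_incl A"
  shows "path (delta A) p w f \<Longrightarrow> f \<in> final A \<Longrightarrow>
     \<exists>f'\<in>final A. path (delta (prune A (Prel A Id R))) p w f'"
proof (induction w arbitrary: p f)
  case Nil
  then have "f = p" by (auto elim: path.cases)
  then show ?case using Nil.prems(2) path.path_nil[of "delta (prune A (Prel A Id R))" p] by (intro bexI[of _ f]) simp_all
next
  case (Cons a w)
  define acc where "acc r \<longleftrightarrow> (\<exists>f\<in>final A. path (delta A) r w f)" for r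
  define S where "S = {r. (p, a, r) \<in> delta A \<and> acc r}"
  obtain r0 where r0: "(p, a, r0) \<in> delta A" "path (delta A) r0 w f"
    using path_ConsE[OF Cons.prems(1)] by blast
  have "r0 \<in> S" using r0 Cons.prems(2) unfolding S_def acc_def by blast
  have finR: "finite R"
    using RS nfa unfolding is_nfa_def by (meson finite_SigmaI finite_subset)
  have "trans R" "irrefl R" using spo unfolding strict_partial_order_def by auto
  hence "acyclic R" by (simp add: acyclic_irrefl trancl_id)
  hence "acyclic (R\<inverse>)" by simp
  hence wf: "wf (R\<inverse>)" using finR by (simp add: finite_acyclic_wf)
  obtain r where r: "r \<in> S" and rmax: "\<And>y. (y, r) \<in> R\<inverse> \<Longrightarrow> y \<notin> S"
    using wfE_min[OF wf \<open>r0 \<in> S\<close>] by blast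
  have rd: "(p, a, r) \<in> delta A" and racc: "acc r" using r unfolding S_def by auto
  have notpr: "\<not> (\<exists>t'\<in>delta A. ((p, a, r), t') \<in> Prel A Id R)"
  proof
    assume "\<exists>t'\<in>delta A. ((p, a, r), t') \<in> Prel A Id R"
    then obtain r'' where d'': "(p, a, r'') \<in> delta A" and rr: "(r, r'') \<in> R"
      unfolding Prel_def by auto
    have "acc r''" using rr Rfw racc unfolding fw_incl_def acc_def by blast
    hence "r'' \<in> S" using d'' unfolding S_def by blast
    with rmax rr show False by blast
  qed
  have tr: "(p, a, r) \<in> delta (prune A (Prel A Id R))"
    using rd notpr unfolding prune_def by simp
  from racc obtain f1 where "f1 \<in> final A" "path (delta A) r w f1" unfolding acc_def by blast
  then obtain f' where "f' \<in> final A" "path (delta (prune A (Prel A Id R))) r w f'"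
    using Cons.IH by blast
  moreover have "final (prune A (Prel A Id R)) = final A" unfolding prune_def by simp
  ultimately show ?case using tr path_cons by fastforce
qed

lemma path_mono: "path d p w q \<Longrightarrow> d \<subseteq> d' \<Longrightarrow> path d' p w q"
  by (induction rule: path.induct) (auto intro: path.intros)

lemma part1:
  assumes nfa: "is_nfa A"
    and RS: "R \<subseteq> states A \<times> states A" and spo: "strict_partial_order R"
    and Rfw: "R \<subseteq> fw_incl A"
  shows "lang (prune A (Prel A Id R)) = lang A"
proof
  show "lang (prune A (Prel A Id R)) \<subseteq> lang A"
  proof
    fix w assume "w \<in> lang (prune A (Prel A Id R))"
    then obtain p f where "p \<in> init A" "f \<in> final A" "path (delta (prune A (Prel A Id R))) p w f"
      unfolding lang_def by (auto simp: prune_def)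
    moreover have "delta (prune A (Prel A Id R)) \<subseteq> delta A" unfolding prune_def by auto
    ultimately show "w \<in> lang A" unfolding lang_def using path_mono[of "delta (prune A (Prel A Id R))" p w f "delta A"] by auto
  qed
  show "lang A \<subseteq> lang (prune A (Prel A Id R))"
  proof
    fix w assume "w \<in> lang A"
    then obtain p f where "p \<in> init A" "f \<in> final A" "path (delta A) p w f"
      unfolding lang_def by blast
    then obtain f' where "f' \<in> final A" "path (delta (prune A (Prel A Id R))) p w f'"
      using main_lemma[OF assms] by blast
    then show "w \<in> lang (prune A (Prel A Id R))"
      using \<open>p \<in> init A\<close> unfolding lang_def by (auto simp: prune_def)
  qed
qed

lemma fw_trans: "trans (fw_incl A)"
  unfolding trans_def fw_incl_def by blast

theorem theorem5p6:
  fixes A :: "('q, 'a) nfa"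
  assumes "is_nfa A"
  shows "(\<forall>R. R \<subseteq> states A \<times> states A \<and> strict_partial_order R \<and> R \<subseteq> fw_incl A
            \<longrightarrow> lang (prune A (Prel A Id R)) = lang A)
       \<and> lang (prune A (Prel A Id (strict_part (fw_incl A)))) = lang A"
proof -
  have spo: "strict_partial_order (strict_part (fw_incl A))"
    using fw_trans[of A] unfolding strict_partial_order_def strict_part_def irrefl_def trans_def
    by blast
  have "strict_part (fw_incl A) \<subseteq> states A \<times> states A"
    unfolding strict_part_def fw_incl_def by auto
  moreover have "strict_part (fw_incl A) \<subseteq> fw_incl A" unfolding strict_part_def by auto
  ultimately show ?thesis using part1[OF assms] spo by blast
qed

end
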